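(* Let $\psi \subseteq \mathbb{N}$ be an undecidable property of generators, and let $L_0 \subseteq L_1 \subseteq L_2 \subseteq \cdots$ be a countable (but not computably enumerable) sequence of languages, each $L_i \subseteq \mathbb{N}$ decidable, such that (1) every $p \in L_i$ satisfies $\psi(p)$, for each $i$; and (2) $\bigcup_{i \in \mathbb{N}} L_i = \psi$. Then $\lim_{i \to \infty} C(L_i) = \infty$.
   Context: Programs (generators) are identified with natural numbers in a fixed universal programming language. For a decidable set $L_i$, $C(L_i)$ denotes the length of the shortest program deciding $L_i$. *)

theory Defs
  imports Main "HOL-Library.Countable"
begin

text \<open>A fixed universal programming language: Kleene's general recursive function terms.\<close>

datatype recf = Z | S | Proj nat | Comp recf "recf list" | Prec recf recf | Mn recf

instance recf :: countable
  by countable_datatype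

inductive eval :: "recf \<Rightarrow> nat list \<Rightarrow> nat \<Rightarrow> bool" where
  eval_Z: "eval Z xs 0"
| eval_S: "eval S (x # xs) (Suc x)"
| eval_Proj: "i < length xs \<Longrightarrow> eval (Proj i) xs (xs ! i)"
| eval_Comp: "list_all2 (\<lambda>g y. eval g xs y) gs ys \<Longrightarrow> eval f ys v \<Longrightarrow> eval (Comp f gs) xs v"
| eval_Prec0: "eval f xs v \<Longrightarrow> eval (Prec f g) (0 # xs) v"
| eval_PrecS: "eval (Prec f g) (n # xs) w \<Longrightarrow> eval g (n # w # xs) v
      \<Longrightarrow> eval (Prec f g) (Suc n # xs) v"
| eval_Mn: "eval f (y # xs) 0 \<Longrightarrow> (\<And>z. z < y \<Longrightarrow> \<exists>w. w > 0 \<and> eval f (z # xs) w)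
      \<Longrightarrow> eval (Mn f) xs y"

text \<open>Programs are natural numbers: program p is the term decoded from p.\<close>

definition prog :: "nat \<Rightarrow> recf" where
  "prog p = from_nat p"

fun bitlen :: "nat \<Rightarrow> nat" where
  "bitlen n = (if n = 0 then 0 else Suc (bitlen (n div 2)))"

definition decides :: "nat \<Rightarrow> nat set \<Rightarrow> bool" where
  "decides p L \<longleftrightarrow> (\<forall>n. eval (prog p) [n] (if n \<in> L then 1 else 0))"

definition decidable_set :: "nat set \<Rightarrow> bool" where
  "decidable_set L \<longleftrightarrow> (\<exists>p. decides p L)"

definition C :: "nat set \<Rightarrow> nat" where
  "C L = (LEAST k. \<exists>p. decides p L \<and> bitlen p = k)"

definition ce_sequence :: "(nat \<Rightarrow> nat set) \<Rightarrow> bool" where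
  "ce_sequence L \<longleftrightarrow> (\<exists>e. \<forall>i. \<exists>c. eval (prog e) [i] c \<and> decides c (L i))"

end

theory Submission
  imports Defs
begin

lemma bitlen_bound: "p < 2 ^ bitlen p"
proof (induction p rule: less_induct)
  case (less p)
  show ?case
  proof (cases "p = 0")
    case True then show ?thesis by simp
  next
    case False
    then have "p div 2 < 2 ^ bitlen (p div 2)" using less by simp
    then show ?thesis using False by simp
  qed
qed

theorem mainTheorem11:
  fixes psi :: "nat set" and L :: "nat \<Rightarrow> nat set"
  assumes undec: "\<not> decidable_set psi"
    and chain: "\<And>i. L i \<subseteq> L (Suc i)"
    and not_ce: "\<not> ce_sequence L"
    and dec: "\<And>i. decidable_set (L i)"
    and sound: "\<And>i. \<forall>p \<in> L i. p \<in> psi"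
    and union: "(\<Union>i. L i) = psi"
  shows "filterlim (\<lambda>i. C (L i)) at_top sequentially"
proof (rule ccontr)
  assume "\<not> ?thesis"
  then obtain Z where nev: "\<not> eventually (\<lambda>i. Z \<le> C (L i)) sequentially"
    unfolding filterlim_at_top by blast
  define S where "S = {n. C (L n) < Z}"
  have infS: "infinite S"
  proof
    assume "finite S"
    then obtain N where "\<forall>n\<in>S. n < N"
      by (meson finite_nat_set_iff_bounded)
    then have "\<forall>n\<ge>N. Z \<le> C (L n)" unfolding S_def
    proof (intro allI impI)
      fix n assume h: "\<forall>n\<in>{n. C (L n) < Z}. n < N" "N \<le> n"
      show "Z \<le> C (L n)"
      proof (rule ccontr)
        assume "\<not> Z \<le> C (L n)"
        then have "n \<in> {n. C (L n) < Z}" by simp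
        then show False using h by auto
      qed
    qed
    then show False using nev unfolding eventually_sequentially by blast
  qed
  have ex: "\<exists>p. decides p (L n) \<and> bitlen p = C (L n)" for n
  proof -
    obtain p where "decides p (L n)" using dec unfolding decidable_set_def by blast
    then have "\<exists>k p. decides p (L n) \<and> bitlen p = k" by blast
    then show ?thesis unfolding C_def by (rule LeastI_ex)
  qed
  define f where "f n = (SOME p. decides p (L n) \<and> bitlen p = C (L n))" for n
  have f: "decides (f n) (L n) \<and> bitlen (f n) = C (L n)" for n
    unfolding f_def using ex by (rule someI_ex)
  have "f ` S \<subseteq> {..<2^Z}"
  proof
    fix x assume "x \<in> f ` S"
    then obtain n where n: "n \<in> S" "x = f n" by blast
    have "x < 2 ^ bitlen x" by (rule bitlen_bound)
    also have "\<dots> \<le> 2 ^ Z" using f[of n] n unfolding S_def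
      by (intro power_increasing) auto
    finally show "x \<in> {..<2^Z}" by simp
  qed
  then have "finite (f ` S)" using finite_subset by blast
  then have "\<exists>a0\<in>S. infinite {a\<in>S. f a = f a0}" by (rule pigeonhole_infinite[OF infS])
  then obtain a0 where a0: "a0 \<in> S" "infinite {a\<in>S. f a = f a0}" by (elim bexE)
  define p where "p = f a0"
  define T where "T = {a\<in>S. f a = f a0}"
  have Tdec: "\<And>i. i \<in> T \<Longrightarrow> decides p (L i)" 
  proof -
    fix i assume "i \<in> T"
    then have "f i = p" unfolding T_def p_def by simp
    then show "decides p (L i)" using f[of i] by simp
  qed
  have big: "\<exists>i\<in>T. j \<le> i" for j
  proof (rule ccontr)
    assume "\<not> (\<exists>i\<in>T. j \<le> i)"
    then have "T \<subseteq> {..<j}" by auto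
    then have "finite T" using finite_subset by blast
    then show False using a0(2) unfolding T_def by simp
  qed
  have mono: "L j \<subseteq> L i" if "j \<le> i" for i j
    using that
  proof (induction rule: dec_induct)
    case base then show ?case by simp
  next
    case (step k) then show ?case using chain[of k] by blast
  qed
  have "decides p psi"
    unfolding decides_def
  proof
    fix n
    show "eval (prog p) [n] (if n \<in> psi then 1 else 0)"
    proof (cases "n \<in> psi")
      case True
      then obtain j where "n \<in> L j" using union by blast
      obtain i where i: "i \<in> T" "j \<le> i" using big by blast
      have "n \<in> L i" using mono[OF i(2)] \<open>n \<in> L j\<close> by blast
      moreover have "eval (prog p) [n] (if n \<in> L i then 1 else 0)"
        using Tdec[OF i(1)] unfolding decides_def by blast
      ultimately show ?thesis using True by simp
    next
      case False
      obtain i where i: "i \<in> T" using big by blast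
      have "n \<notin> L i" using False union by blast
      moreover have "eval (prog p) [n] (if n \<in> L i then 1 else 0)"
        using Tdec[OF i] unfolding decides_def by blast
      ultimately show ?thesis using False by simp
    qed
  qed
  then show False using undec unfolding decidable_set_def by blast
qed

end
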